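(* Let $1\le k\le d$ and let $p_0p_1\cdots p_k$ be a non-degenerate $k$-simplex in $\mathbb{R}^d$ with real values $\tau(p_0),\dots,\tau(p_k)$ such that $\tau(p_0)\le\tau(p_i)$ for all $i$. Let $\sigma>0$ with $\|\nabla\tau\|<\sigma$, and let $0<\varepsilon<1$. Let $F=p_1\cdots p_k$, let $\bar p_0$ be the orthogonal projection of $p_0$ onto $\operatorname{aff}(F)$, and $d_{p_0}:=|p_0\bar p_0|$. For $\delta\ge0$ let $\tau'_\delta$ be the affine function on $\operatorname{aff}(p_0\cdots p_k)$ with $\tau'_\delta(p_0)=\tau(p_0)+\delta$ and $\tau'_\delta(p_i)=\tau(p_i)$ for $i\ge1$. (1) If $\bar p_0\in F$ and $\|\nabla\tau|_F\|\le(1-\varepsilon)\sigma$, then $\|\nabla\tau'_\delta\|<\sigma$ for every $\delta\in[0,\varepsilon\, d_{p_0}\,\sigma]$. (2) If $\bar p_0\notin F$, let $u$ be the point of $F$ closest to $\bar p_0$; if $\|\nabla\tau|_F\|\le(1-\varepsilon)\,\sigma\,\sin\angle p_0u\bar p_0$, then $\|\nabla\tau'_\delta\|<\sigma$ for every $\delta\in[0,\varepsilon\, d_{p_0}\,\sigma]$.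
   Context: Given values at the vertices of a simplex, $\tau$ also denotes the affine interpolating function on the affine hull of the simplex, and $\nabla\tau$ its gradient within that affine hull (a vector parallel to the hull), with Euclidean norm $\|\cdot\|$. $\nabla\tau|_F$ is the gradient of the restriction of $\tau$ to $\operatorname{aff}(F)$ (zero if $F$ is a single point). $\operatorname{aff}$ denotes affine hull. *)

theory Defs
  imports "HOL-Analysis.Analysis"
begin

text \<open>Gradient, within the affine hull of the finite point set S, of the affine function
  interpolating the values f on S: the unique vector g parallel to aff S (i.e. in the span of
  the difference vectors of S) with g \<bullet> (x - y) = f x - f y for all x, y in S.\<close>
definition affgrad :: "'a::euclidean_space set \<Rightarrow> ('a \<Rightarrow> real) \<Rightarrow> 'a" where
  "affgrad S f = (THE g. g \<in> span {x - y | x y. x \<in> S \<and> y \<in> S} \<and>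
                         (\<forall>x\<in>S. \<forall>y\<in>S. g \<bullet> (x - y) = f x - f y))"

definition vangle :: "'a::euclidean_space \<Rightarrow> 'a \<Rightarrow> real" where
  "vangle v w = (if v = 0 \<or> w = 0 then pi / 2 else arccos ((v \<bullet> w) / (norm v * norm w)))"

definition angle3 :: "'a::euclidean_space \<Rightarrow> 'a \<Rightarrow> 'a \<Rightarrow> real" where
  "angle3 a b c = vangle (a - b) (c - b)"

end

theory Submission
  imports Defs
begin

lemma aff_diff_span:
  assumes "a \<in> affine hull S" "b \<in> affine hull S"
  shows "a - b \<in> span {x - y | x y. x \<in> S \<and> y \<in> S}"
proof -
  have "S \<noteq> {}" using assms by auto
  then obtain s where s: "s \<in> S" by blast
  let ?B = "(\<lambda>x. -s+x) ` (S-{s})"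
  have sub: "?B \<subseteq> {x - y | x y. x \<in> S \<and> y \<in> S}" using s by auto
  obtain u where u: "u \<in> span ?B" "a = s + u" using assms(1) affine_hull_span2[OF s] by auto
  obtain v where v: "v \<in> span ?B" "b = s + v" using assms(2) affine_hull_span2[OF s] by auto
  have "a - b = u - v" using u v by simp
  moreover have "u - v \<in> span ?B" using u v span_diff by blast
  ultimately show ?thesis using span_mono[OF sub] by auto
qed

lemma grad_unique:
  assumes "g1 \<in> span {x - y | x y. x \<in> S \<and> y \<in> S}"
    "\<forall>x\<in>S. \<forall>y\<in>S. g1 \<bullet> (x - y) = f x - f y"
    "g2 \<in> span {x - y | x y. x \<in> S \<and> y \<in> S}"
    "\<forall>x\<in>S. \<forall>y\<in>S. g2 \<bullet> (x - y) = f x - f y"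
  shows "g1 = g2"
proof -
  let ?D = "{x - y | x y. x \<in> S \<and> y \<in> S}"
  have m: "g1 - g2 \<in> span ?D" using assms span_diff by blast
  have "orthogonal (g1 - g2) w" if "w \<in> ?D" for w
    using that assms(2,4) by (auto simp: orthogonal_def inner_diff_left)
  hence "orthogonal (g1 - g2) (g1 - g2)" using orthogonal_to_span[OF m] by blast
  thus ?thesis by (simp add: orthogonal_self)
qed

lemma grad_exists:
  fixes S :: "'a::euclidean_space set"
  assumes "\<not> affine_dependent S"
  shows "\<exists>g. g \<in> span {x - y | x y. x \<in> S \<and> y \<in> S} \<and> (\<forall>x\<in>S. \<forall>y\<in>S. g \<bullet> (x - y) = f x - f y)"
proof (cases "S = {}")
  case True
  then show ?thesis by (auto intro: span_zero)
next
  case False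
  then obtain a where a: "a \<in> S" by blast
  let ?D = "{x - y | x y. x \<in> S \<and> y \<in> S}"
  let ?B = "(\<lambda>x. -a+x) ` (S-{a})"
  have "independent ?B" using assms affine_dependent_iff_dependent2[OF a] by simp
  then obtain h where h: "linear h" "\<forall>b\<in>?B. h b = f (a + b) - f a"
    using linear_independent_extend[of ?B "\<lambda>b. f (a + b) - f a"] by blast
  have hx: "h (-a + x) = f x - f a" if "x \<in> S" for x
  proof (cases "x = a")
    case True then show ?thesis using linear_0[OF h(1)] by simp
  next
    case False then show ?thesis using h(2) that by auto
  qed
  define w where "w = adjoint h 1"
  have wx: "x \<bullet> w = h x" for x using adjoint_works[OF h(1), of x 1] by (simp add: w_def)
  obtain y z where yz: "y \<in> span ?D" "\<And>v. v \<in> span ?D \<Longrightarrow> orthogonal z v" "w = y + z"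
    by (rule orthogonal_subspace_decomp_exists[of ?D w]) blast
  have "y \<bullet> (x1 - x2) = f x1 - f x2" if "x1 \<in> S" "x2 \<in> S" for x1 x2
  proof -
    have "x1 - x2 \<in> span ?D" using that by (intro span_base) auto
    hence "z \<bullet> (x1 - x2) = 0" using yz(2) by (simp add: orthogonal_def)
    hence "y \<bullet> (x1 - x2) = w \<bullet> (x1 - x2)" using yz(3) by (simp add: inner_add_left)
    also have "\<dots> = (-a + x1) \<bullet> w - (-a + x2) \<bullet> w"
      by (simp add: inner_diff_right inner_add_left inner_commute)
    also have "\<dots> = f x1 - f x2" using wx hx that by simp
    finally show ?thesis .
  qed
  then show ?thesis using yz(1) by blast
qed

lemma affgrad_props:
  assumes "\<not> affine_dependent S"
  shows "affgrad S f \<in> span {x - y | x y. x \<in> S \<and> y \<in> S}"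
    "\<forall>x\<in>S. \<forall>y\<in>S. affgrad S f \<bullet> (x - y) = f x - f y"
proof -
  obtain g where g: "g \<in> span {x - y | x y. x \<in> S \<and> y \<in> S}" "\<forall>x\<in>S. \<forall>y\<in>S. g \<bullet> (x - y) = f x - f y"
    using grad_exists[OF assms] by blast
  have "affgrad S f = g" unfolding affgrad_def
  proof (rule the_equality)
    show "g \<in> span {x - y | x y. x \<in> S \<and> y \<in> S} \<and> (\<forall>x\<in>S. \<forall>y\<in>S. g \<bullet> (x - y) = f x - f y)" using g by blast
  next
    fix g' assume "g' \<in> span {x - y | x y. x \<in> S \<and> y \<in> S} \<and> (\<forall>x\<in>S. \<forall>y\<in>S. g' \<bullet> (x - y) = f x - f y)"
    then show "g' = g" using grad_unique[of g' S f g] g by blast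
  qed
  thus "affgrad S f \<in> span {x - y | x y. x \<in> S \<and> y \<in> S}"
    "\<forall>x\<in>S. \<forall>y\<in>S. affgrad S f \<bullet> (x - y) = f x - f y" using g by auto
qed

lemma affgrad_eq:
  assumes "\<not> affine_dependent S" "g \<in> span {x - y | x y. x \<in> S \<and> y \<in> S}"
    "\<forall>x\<in>S. \<forall>y\<in>S. g \<bullet> (x - y) = f x - f y"
  shows "affgrad S f = g"
  using grad_unique[OF affgrad_props[OF assms(1)] assms(2,3)] .

lemma closest_affine_orth:
  fixes A :: "'a::euclidean_space set"
  assumes "affine A" "closed A" "A \<noteq> {}" "x \<in> A"
  shows "(a - closest_point A a) \<bullet> (x - closest_point A a) = 0"
proof -
  let ?c = "closest_point A a"
  have c: "?c \<in> A" using closest_point_in_set assms by blast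
  have cv: "convex A" using assms affine_imp_convex by blast
  have x2: "2 *\<^sub>R ?c + (-1) *\<^sub>R x \<in> A" using mem_affine[OF assms(1) c assms(4), of 2 "-1"] by simp
  have h1: "(a - ?c) \<bullet> (x - ?c) \<le> 0" using closest_point_dot[OF cv assms(2,4)] .
  have h2: "(a - ?c) \<bullet> ((2 *\<^sub>R ?c + (-1) *\<^sub>R x) - ?c) \<le> 0" using closest_point_dot[OF cv assms(2) x2] .
  have e: "(2 *\<^sub>R ?c + (-1) *\<^sub>R x) - ?c = - (x - ?c)" by (simp add: algebra_simps scaleR_2)
  have "(a - ?c) \<bullet> (- (x - ?c)) \<le> 0" using h2 unfolding e .
  then show ?thesis using h1 unfolding inner_minus_right by linarith
qed


lemma arith1:
  fixes G C e \<sigma> \<epsilon> :: real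
  assumes "0 \<le> G" "G \<le> (1-\<epsilon>)*\<sigma>" "C \<le> 0" "G^2 + C^2 < \<sigma>^2" "0 < \<epsilon>" "\<epsilon> < 1" "\<sigma> > 0"
    "0 \<le> e" "e \<le> \<epsilon>*\<sigma>"
  shows "G^2 + (C+e)^2 < \<sigma>^2"
proof (cases "C + e \<le> 0")
  case True
  then have "(C+e)^2 \<le> C^2" using power_mono[of "-(C+e)" "-C" 2] assms True by (simp add: power2_eq_square algebra_simps)
  then show ?thesis using assms by linarith
next
  case False
  then have "(C+e)^2 \<le> (\<epsilon>*\<sigma>)^2" using assms by (intro power_mono) auto
  moreover have "G^2 \<le> ((1-\<epsilon>)*\<sigma>)^2" using assms by (intro power_mono) auto
  moreover have "((1-\<epsilon>)*\<sigma>)^2 + (\<epsilon>*\<sigma>)^2 < \<sigma>^2"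
  proof -
    have "((1-\<epsilon>)*\<sigma>)^2 + (\<epsilon>*\<sigma>)^2 = \<sigma>^2 - 2*\<epsilon>*(1-\<epsilon>)*\<sigma>^2" by (simp add: power2_eq_square algebra_simps)
    moreover have "0 < 2*\<epsilon>*(1-\<epsilon>)*\<sigma>^2" using assms by simp
    ultimately show ?thesis by linarith
  qed
  ultimately show ?thesis by linarith
qed

lemma arith2:
  fixes G C e \<sigma> \<epsilon> a d L :: real
  assumes "0 \<le> G" "d > 0" "a > 0" "L^2 = a^2 + d^2" "L > 0" "G*L \<le> (1-\<epsilon>)*\<sigma>*d"
    "C*d \<le> G*a" "G^2 + C^2 < \<sigma>^2" "0 < \<epsilon>" "\<epsilon> < 1" "\<sigma> > 0"
    "0 \<le> e" "e \<le> \<epsilon>*\<sigma>"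
  shows "G^2 + (C+e)^2 < \<sigma>^2"
proof (cases "C + e \<le> 0")
  case True
  then have "(C+e)^2 \<le> C^2" using power_mono[of "-(C+e)" "-C" 2] assms True by (simp add: power2_eq_square algebra_simps)
  then show ?thesis using assms by linarith
next
  case False
  have aL: "a < L" using assms by (smt (verit) power_mono zero_less_power)
  have "e*d \<le> \<epsilon>*\<sigma>*d" using assms by (intro mult_right_mono) auto
  moreover have "(C+e)*d = C*d + e*d" by (simp add: algebra_simps)
  ultimately have s: "(C+e)*d \<le> G*a + \<epsilon>*\<sigma>*d" using assms by linarith
  have "((C+e)*d)^2 \<le> (G*a + \<epsilon>*\<sigma>*d)^2" using s False assms by (intro power_mono) auto
  hence A: "(G^2 + (C+e)^2)*d^2 \<le> G^2*L^2 + 2*(G*a)*(\<epsilon>*\<sigma>*d) + (\<epsilon>*\<sigma>*d)^2"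
    using assms(4) by (simp add: power2_eq_square algebra_simps)
  have B: "G^2*L^2 \<le> ((1-\<epsilon>)*\<sigma>*d)^2"
    using assms by (metis power_mono power_mult_distrib mult_nonneg_nonneg less_imp_le)
  have "G*a \<le> G*L" using aL assms by (simp add: mult_left_mono)
  hence C: "2*(G*a)*(\<epsilon>*\<sigma>*d) \<le> 2*((1-\<epsilon>)*\<sigma>*d)*(\<epsilon>*\<sigma>*d)"
    using assms by (intro mult_right_mono mult_left_mono) auto
  show ?thesis
  proof (cases "G = 0")
    case True
    have "(G^2 + (C+e)^2)*d^2 \<le> (\<epsilon>*\<sigma>*d)^2" using A True by simp
    also have "\<dots> < (\<sigma>*d)^2" using assms by (intro power_strict_mono) auto
    finally show ?thesis using assms by (simp add: power_mult_distrib)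
  next
    case False
    have "G*a < G*L" using aL assms False by simp
    hence C': "2*(G*a)*(\<epsilon>*\<sigma>*d) < 2*((1-\<epsilon>)*\<sigma>*d)*(\<epsilon>*\<sigma>*d)"
      using assms \<open>G*a \<le> G*L\<close> by (smt (verit) mult_strict_right_mono mult_pos_pos mult_le_cancel_right)
    have "(G^2 + (C+e)^2)*d^2 < ((1-\<epsilon>)*\<sigma>*d)^2 + 2*((1-\<epsilon>)*\<sigma>*d)*(\<epsilon>*\<sigma>*d) + (\<epsilon>*\<sigma>*d)^2"
      using A B C' by linarith
    also have "\<dots> = (\<sigma>*d)^2" by (simp add: power2_eq_square algebra_simps)
    finally show ?thesis using assms by (simp add: power_mult_distrib)
  qed
qed

theorem mainTheorem6:
  fixes p :: "nat \<Rightarrow> 'a::euclidean_space" and k :: nat and \<tau> :: "'a \<Rightarrow> real"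
    and \<sigma> \<epsilon> :: real
  assumes k1: "1 \<le> k"
    and inj: "inj_on p {0..k}"
    and nondeg: "\<not> affine_dependent (p ` {0..k})"
    and min0: "\<forall>i\<in>{0..k}. \<tau> (p 0) \<le> \<tau> (p i)"
    and sigma_pos: "\<sigma> > 0"
    and grad_lt: "norm (affgrad (p ` {0..k}) \<tau>) < \<sigma>"
    and eps: "0 < \<epsilon>" "\<epsilon> < 1"
  shows "let F = convex hull (p ` {1..k});
             pbar = closest_point (affine hull (p ` {1..k})) (p 0);
             dp0 = dist (p 0) pbar;
             gF = norm (affgrad (p ` {1..k}) \<tau>);
             \<tau>' = (\<lambda>\<delta>::real. \<tau>(p 0 := \<tau> (p 0) + \<delta>))
         in (pbar \<in> F \<and> gF \<le> (1 - \<epsilon>) * \<sigma> \<longrightarrow>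
               (\<forall>\<delta>\<in>{0..\<epsilon> * dp0 * \<sigma>}. norm (affgrad (p ` {0..k}) (\<tau>' \<delta>)) < \<sigma>))
          \<and> (pbar \<notin> F \<longrightarrow>
               (let u = closest_point F pbar in
                  gF \<le> (1 - \<epsilon>) * \<sigma> * sin (angle3 (p 0) u pbar) \<longrightarrow>
                  (\<forall>\<delta>\<in>{0..\<epsilon> * dp0 * \<sigma>}. norm (affgrad (p ` {0..k}) (\<tau>' \<delta>)) < \<sigma>)))"
proof -
  define S0 where "S0 = p ` {0..k}"
  define S1 where "S1 = p ` {1..k}"
  define pbar where "pbar = closest_point (affine hull S1) (p 0)"
  define n where "n = p 0 - pbar"
  define g where "g = affgrad S0 \<tau>"
  define gF where "gF = affgrad S1 \<tau>"
  define N where "N = n \<bullet> n"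
  define d where "d = norm n"
  let ?D0 = "{x - y | x y. x \<in> S0 \<and> y \<in> S0}"
  let ?D1 = "{x - y | x y. x \<in> S1 \<and> y \<in> S1}"
  have "{0..k} = insert 0 {1..k}" by auto
  hence S0: "S0 = insert (p 0) S1" unfolding S0_def S1_def by simp
  have p0S1: "p 0 \<notin> S1"
  proof
    assume "p 0 \<in> S1"
    then obtain i where i: "i \<in> {1..k}" "p 0 = p i" unfolding S1_def by auto
    then have "0 = i" using inj unfolding inj_on_def by (metis atLeastAtMost_iff le0)
    with i show False by simp
  qed
  have S1ne: "S1 \<noteq> {}" using k1 unfolding S1_def by auto
  have S1sub: "S1 \<subseteq> S0" using S0 by auto
  have ind0: "\<not> affine_dependent S0" using nondeg S0_def by simp
  have ind1: "\<not> affine_dependent S1" using affine_independent_subset[OF ind0 S1sub] .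
  have p0naff: "p 0 \<notin> affine hull S1"
  proof
    assume "p 0 \<in> affine hull S1"
    moreover have "S0 - {p 0} = S1" using S0 p0S1 by auto
    ultimately have "affine_dependent S0" unfolding affine_dependent_def using S0 by auto
    with ind0 show False by simp
  qed
  have affne: "affine hull S1 \<noteq> {}" using S1ne by simp
  have pbar_in: "pbar \<in> affine hull S1" unfolding pbar_def
    using closest_point_in_set[OF closed_affine_hull affne] .
  have orth: "n \<bullet> (x - pbar) = 0" if "x \<in> affine hull S1" for x
    unfolding n_def pbar_def using closest_affine_orth[OF affine_affine_hull closed_affine_hull affne that] .
  have n0: "n \<noteq> 0" using pbar_in p0naff n_def by auto
  have dpos: "d > 0" using n0 d_def by simp
  have Nd: "N = d^2" unfolding N_def d_def by (simp add: power2_norm_eq_inner)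
  have Npos: "N > 0" using Nd dpos by simp
  have dist_eq: "dist (p 0) pbar = d" unfolding d_def n_def dist_norm ..
  have orthD1: "n \<bullet> v = 0" if v: "v \<in> span ?D1" for v
  proof -
    have "orthogonal n w" if w: "w \<in> ?D1" for w
    proof -
      obtain x y where xy: "w = x - y" "x \<in> S1" "y \<in> S1" using w by blast
      have ox: "n \<bullet> (x - pbar) = 0" using orth hull_inc[OF xy(2)] by blast
      have oy: "n \<bullet> (y - pbar) = 0" using orth hull_inc[OF xy(3)] by blast
      have "x - y = (x - pbar) - (y - pbar)" by simp
      then have "n \<bullet> w = 0" using ox oy xy(1) by (simp add: inner_diff_right)
      then show ?thesis by (simp add: orthogonal_def inner_commute)
    qed
    then have "orthogonal n v" by (rule orthogonal_to_span[OF v])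
    then show ?thesis by (simp add: orthogonal_def inner_commute)
  qed
  have nD0: "n \<in> span ?D0"
  proof -
    have "p 0 \<in> affine hull S0" using S0 by (simp add: hull_inc)
    moreover have "pbar \<in> affine hull S0" using pbar_in hull_mono[OF S1sub] by blast
    ultimately show ?thesis unfolding n_def by (rule aff_diff_span)
  qed
  note gp = affgrad_props[OF ind0, of \<tau>, folded g_def]
  note gFp = affgrad_props[OF ind1, of \<tau>, folded gF_def]
  have zsp: "z - pbar \<in> span (insert n ?D1)" if "z \<in> S0" for z
  proof (cases "z = p 0")
    case True then show ?thesis using n_def span_base[of n "insert n ?D1"] by simp
  next
    case False
    then have zS1: "z \<in> S1" using that S0 by auto
    have "z - pbar \<in> span ?D1" using aff_diff_span[OF hull_inc[OF zS1] pbar_in] .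
    then show ?thesis using subsetD[OF span_mono[OF subset_insertI[of ?D1 n]]] by blast
  qed
  have "?D0 \<subseteq> span (insert n ?D1)"
  proof
    fix w assume "w \<in> ?D0"
    then obtain x y where xy: "w = x - y" "x \<in> S0" "y \<in> S0" by blast
    have "(x - pbar) - (y - pbar) \<in> span (insert n ?D1)" by (rule span_diff[OF zsp[OF xy(2)] zsp[OF xy(3)]])
    then show "w \<in> span (insert n ?D1)" using xy(1) by simp
  qed
  then have "span ?D0 \<subseteq> span (insert n ?D1)" by (rule span_minimal[OF _ subspace_span])
  then have "g \<in> span (insert n ?D1)" using gp(1) by blast
  then obtain t where t: "g - t *\<^sub>R n \<in> span ?D1" using span_breakdown_eq by blast
  define c where "c = (g \<bullet> n) / N"
  have "g \<bullet> n = (g - t *\<^sub>R n) \<bullet> n + t * N" by (simp add: N_def inner_diff_left)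
  also have "(g - t *\<^sub>R n) \<bullet> n = 0" using orthD1[OF t] by (simp add: inner_commute)
  finally have gn: "g \<bullet> n = c * N" unfolding c_def using Npos by simp
  have ct: "c = t" using gn \<open>g \<bullet> n = (g - t *\<^sub>R n) \<bullet> n + t * N\<close> \<open>(g - t *\<^sub>R n) \<bullet> n = 0\<close> Npos by simp
  have gF_eq: "gF = g - c *\<^sub>R n"
    unfolding gF_def
  proof (rule affgrad_eq[OF ind1])
    show "g - c *\<^sub>R n \<in> span ?D1" using t ct by simp
    show "\<forall>x\<in>S1. \<forall>y\<in>S1. (g - c *\<^sub>R n) \<bullet> (x - y) = \<tau> x - \<tau> y"
    proof (intro ballI)
      fix x y assume xy: "x \<in> S1" "y \<in> S1"
      then have "n \<bullet> (x - y) = 0" using orthD1[of "x - y"] by (auto intro: span_base)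
      then show "(g - c *\<^sub>R n) \<bullet> (x - y) = \<tau> x - \<tau> y" using gp(2) xy S1sub
        by (auto simp: inner_diff_left)
    qed
  qed
  have gFn: "gF \<bullet> n = 0" using orthD1[OF gFp(1)] by (simp add: inner_commute)
  define G where "G = norm gF"
  have normsq: "(norm (gF + b *\<^sub>R n))^2 = G^2 + (b*d)^2" for b
  proof -
    have "(norm (gF + b *\<^sub>R n))^2 = gF \<bullet> gF + 2*b*(gF \<bullet> n) + b^2 * N"
      unfolding power2_norm_eq_inner by (simp add: inner_add_left inner_add_right inner_commute N_def power2_eq_square algebra_simps)
    then show ?thesis using gFn Nd by (simp add: G_def power2_norm_eq_inner power_mult_distrib)
  qed
  have g_dec: "g = gF + c *\<^sub>R n" using gF_eq by simp
  have Gc: "G^2 + (c*d)^2 < \<sigma>^2"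
  proof -
    have "norm g < \<sigma>" using grad_lt g_def S0_def by simp
    then have "(norm g)^2 < \<sigma>^2" by (intro power_strict_mono) auto
    then show ?thesis using normsq[of c] g_dec by simp
  qed
  have G0: "G \<ge> 0" by (simp add: G_def)
  have nz: "n \<bullet> (z - p 0) = (if z = p 0 then 0 else - N)" if "z \<in> S0" for z
  proof (cases "z = p 0")
    case False
    then have zS1: "z \<in> S1" using that S0 by auto
    have "n \<bullet> (z - pbar) = 0" using orth[OF hull_inc[OF zS1]] .
    moreover have e: "z - p 0 = (z - pbar) - n" by (simp add: n_def)
    have "n \<bullet> (z - p 0) = n \<bullet> (z - pbar) - n \<bullet> n" unfolding e by (rule inner_diff_right)
    ultimately show ?thesis using False by (simp add: N_def)
  qed simp
  have g'_eq: "affgrad S0 (\<tau>(p 0 := \<tau> (p 0) + \<delta>)) = gF + (c + \<delta>/N) *\<^sub>R n" for \<delta>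
  proof (rule affgrad_eq[OF ind0])
    have "g + (\<delta>/N) *\<^sub>R n \<in> span ?D0" using gp(1) nD0 by (intro span_add span_mul)
    moreover have "gF + (c + \<delta>/N) *\<^sub>R n = g + (\<delta>/N) *\<^sub>R n" using g_dec by (simp add: algebra_simps)
    ultimately show "gF + (c + \<delta>/N) *\<^sub>R n \<in> span ?D0" by simp
    show "\<forall>x\<in>S0. \<forall>y\<in>S0. (gF + (c + \<delta>/N) *\<^sub>R n) \<bullet> (x - y) = (\<tau>(p 0 := \<tau> (p 0) + \<delta>)) x - (\<tau>(p 0 := \<tau> (p 0) + \<delta>)) y"
    proof (intro ballI)
      fix x y assume xy: "x \<in> S0" "y \<in> S0"
      have e1: "gF + (c + \<delta>/N) *\<^sub>R n = g + (\<delta>/N) *\<^sub>R n" using g_dec by (simp add: algebra_simps)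
      have e2: "n \<bullet> (x - y) = n \<bullet> (x - p 0) - n \<bullet> (y - p 0)" by (simp add: inner_diff_right)
      have "(g + (\<delta>/N) *\<^sub>R n) \<bullet> (x - y) = \<tau> x - \<tau> y + (\<delta>/N) * (n \<bullet> (x - y))"
        using gp(2) xy by (simp add: inner_add_left)
      also have "\<dots> = (\<tau>(p 0 := \<tau> (p 0) + \<delta>)) x - (\<tau>(p 0 := \<tau> (p 0) + \<delta>)) y"
        unfolding e2 using nz[OF xy(1)] nz[OF xy(2)] Npos by (auto simp: field_simps)
      finally show "(gF + (c + \<delta>/N) *\<^sub>R n) \<bullet> (x - y) = (\<tau>(p 0 := \<tau> (p 0) + \<delta>)) x - (\<tau>(p 0 := \<tau> (p 0) + \<delta>)) y"
        using e1 by simp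
    qed
  qed
  have norm'_sq: "(norm (affgrad S0 (\<tau>(p 0 := \<tau> (p 0) + \<delta>))))^2 = G^2 + (c*d + \<delta>/d)^2" for \<delta>
  proof -
    have "(c + \<delta>/N) * d = c*d + \<delta>/d" using Nd dpos by (simp add: field_simps power2_eq_square)
    then show ?thesis using normsq[of "c + \<delta>/N"] g'_eq[of \<delta>] by simp
  qed
  have fin: "norm (affgrad S0 (\<tau>(p 0 := \<tau> (p 0) + \<delta>))) < \<sigma>" if "G^2 + (c*d + \<delta>/d)^2 < \<sigma>^2" for \<delta>
  proof -
    have "(norm (affgrad S0 (\<tau>(p 0 := \<tau> (p 0) + \<delta>))))^2 < \<sigma>^2" using that unfolding norm'_sq[of \<delta>] .
    from power_less_imp_less_base[OF this] show ?thesis using sigma_pos by linarith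
  qed
  have dr: "0 \<le> \<delta>/d \<and> \<delta>/d \<le> \<epsilon>*\<sigma>" if "\<delta> \<in> {0..\<epsilon> * d * \<sigma>}" for \<delta>
    using that dpos by (simp add: pos_divide_le_eq mult_ac)
  have half: "g \<bullet> (p 0 - z) \<le> 0" if "z \<in> convex hull S1" for z
  proof -
    have "S1 \<subseteq> {z. g \<bullet> p 0 \<le> g \<bullet> z}"
    proof
      fix z assume z: "z \<in> S1"
      then obtain i where "i \<in> {1..k}" "z = p i" unfolding S1_def by auto
      then have "\<tau> (p 0) \<le> \<tau> z" using min0 by auto
      moreover have "g \<bullet> (z - p 0) = \<tau> z - \<tau> (p 0)" using gp(2) z S0 by auto
      ultimately show "z \<in> {z. g \<bullet> p 0 \<le> g \<bullet> z}" by (simp add: inner_diff_right)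
    qed
    then have "convex hull S1 \<subseteq> {z. g \<bullet> p 0 \<le> g \<bullet> z}" by (intro hull_minimal convex_halfspace_ge)
    then show ?thesis using that by (auto simp: inner_diff_right)
  qed
  show ?thesis
    unfolding Let_def S1_def[symmetric] S0_def[symmetric] pbar_def[symmetric] gF_def[symmetric] dist_eq
  proof (intro conjI impI ballI)
    fix \<delta> assume A: "pbar \<in> convex hull S1 \<and> norm gF \<le> (1 - \<epsilon>) * \<sigma>" and "\<delta> \<in> {0..\<epsilon> * d * \<sigma>}"
    have "g \<bullet> n \<le> 0" using half[of pbar] A n_def by simp
    then have "c \<le> 0" using gn Npos by (simp add: mult_le_0_iff)
    then have "c*d \<le> 0" using dpos by (simp add: mult_le_0_iff)
    moreover have "G \<le> (1 - \<epsilon>) * \<sigma>" using A G_def by simp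
    ultimately have "G^2 + (c*d + \<delta>/d)^2 < \<sigma>^2"
      using arith1[of G \<epsilon> \<sigma> "c*d" "\<delta>/d"] G0 Gc eps sigma_pos dr[OF \<open>\<delta> \<in> _\<close>] by blast
    then show "norm (affgrad S0 (\<tau>(p 0 := \<tau> (p 0) + \<delta>))) < \<sigma>" by (rule fin)
  next
    fix \<delta> assume nF: "pbar \<notin> convex hull S1"
      and A: "norm gF \<le> (1 - \<epsilon>) * \<sigma> * sin (angle3 (p 0) (closest_point (convex hull S1) pbar) pbar)"
      and "\<delta> \<in> {0..\<epsilon> * d * \<sigma>}"
    define u where "u = closest_point (convex hull S1) pbar"
    have "finite S1" unfolding S1_def by simp
    then have "compact (convex hull S1)" by (simp add: compact_convex_hull finite_imp_compact)
    then have uF: "u \<in> convex hull S1" unfolding u_def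
      by (rule closest_point_in_set[OF compact_imp_closed]) (simp add: S1ne)
    then have uA: "u \<in> affine hull S1" using convex_hull_subset_affine_hull by blast
    define a where "a = norm (pbar - u)"
    define L where "L = norm (p 0 - u)"
    have apos: "a > 0" using uF nF a_def by auto
    have Lpos: "L > 0" using uA p0naff L_def by auto
    have nu: "n \<bullet> (pbar - u) = 0" using orth[OF uA] by (simp add: inner_diff_right)
    have pu: "p 0 - u = n + (pbar - u)" by (simp add: n_def)
    have L2: "L^2 = a^2 + d^2" unfolding L_def a_def d_def pu
      using nu by (simp add: power2_norm_eq_inner inner_add_left inner_add_right inner_commute)
    have ip: "(p 0 - u) \<bullet> (pbar - u) = a^2" unfolding pu a_def
      using nu by (simp add: inner_add_left power2_norm_eq_inner)
    have aL2: "a^2 \<le> L^2" using L2 by simp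
    have aL: "a \<le> L" using power2_le_imp_le[OF aL2] Lpos by linarith
    have ang: "angle3 (p 0) u pbar = arccos (a / L)"
    proof -
      have ne: "\<not> (p 0 - u = 0 \<or> pbar - u = 0)" using apos Lpos unfolding a_def L_def by auto
      have "angle3 (p 0) u pbar = arccos (((p 0 - u) \<bullet> (pbar - u)) / (L * a))"
        unfolding angle3_def vangle_def L_def a_def using ne by (simp only: if_False)
      also have "((p 0 - u) \<bullet> (pbar - u)) / (L * a) = a / L"
        unfolding ip using apos Lpos by (simp add: power2_eq_square)
      finally show ?thesis .
    qed
    have sinv: "sin (angle3 (p 0) u pbar) = d / L"
    proof -
      have "sin (angle3 (p 0) u pbar) = sqrt (1 - (a/L)^2)"
      proof -
        have "0 \<le> a/L" using apos Lpos by simp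
        moreover have "a/L \<le> 1" using aL Lpos by simp
        ultimately show ?thesis unfolding ang by (intro sin_arccos) linarith+
      qed
      also have "\<dots> = d / L"
      proof (rule real_sqrt_unique)
        have dL: "d^2 = L^2 - a^2" using L2 by simp
        show "(d/L)^2 = 1 - (a/L)^2" unfolding power_divide dL using Lpos by (simp add: diff_divide_distrib)
        show "0 \<le> d/L" using dpos Lpos by simp
      qed
      finally show ?thesis .
    qed
    have GL: "G * L \<le> (1 - \<epsilon>) * \<sigma> * d"
      using A[folded u_def] sinv Lpos by (simp add: G_def field_simps)
    have "g \<bullet> (p 0 - u) \<le> 0" using half[OF uF] .
    moreover have "g \<bullet> (p 0 - u) = c * N + gF \<bullet> (pbar - u)"
    proof -
      have "g \<bullet> (pbar - u) = gF \<bullet> (pbar - u) + c * (n \<bullet> (pbar - u))"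
        unfolding g_dec by (simp add: inner_add_left)
      then have "g \<bullet> (pbar - u) = gF \<bullet> (pbar - u)" using nu by simp
      moreover have "g \<bullet> (p 0 - u) = g \<bullet> n + g \<bullet> (pbar - u)" unfolding pu by (simp add: inner_add_right)
      ultimately show ?thesis using gn by simp
    qed
    ultimately have "c * N \<le> - (gF \<bullet> (pbar - u))" by simp
    also have "- (gF \<bullet> (pbar - u)) = gF \<bullet> (u - pbar)" by (simp add: inner_diff_right)
    also have "\<dots> \<le> G * a" using norm_cauchy_schwarz[of gF "u - pbar"]
      by (simp add: G_def a_def norm_minus_commute)
    finally have Cd: "(c*d) * d \<le> G * a" using Nd by (simp add: power2_eq_square mult.assoc)
    have "G^2 + (c*d + \<delta>/d)^2 < \<sigma>^2"
      using arith2[of G d a L \<epsilon> \<sigma> "c*d" "\<delta>/d", OF G0 dpos apos L2 Lpos GL Cd Gc eps sigma_pos]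
        dr[OF \<open>\<delta> \<in> _\<close>] by blast
    then show "norm (affgrad S0 (\<tau>(p 0 := \<tau> (p 0) + \<delta>))) < \<sigma>" by (rule fin)
  qed
qed

end
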